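(* Let $P\subseteq\mathbb{R}^d$ and $P'\subseteq\mathbb{R}^{d'}$ be nonempty polyhedra such that $P'$ is the image of a face of $P$ under an affine map. If $P$ admits a MILEF of complexity $(m,k)$, then $P'$ also admits a MILEF of complexity $(m,k)$.
   Context: A MILEF of complexity $(m,k)$ of a convex set $P\subseteq\mathbb{R}^d$ is a triple $(Q,\sigma,\pi)$ where $Q\subseteq\mathbb{R}^\ell$ is a polyhedron with at most $m$ facets, and $\sigma:\mathbb{R}^\ell\to\mathbb{R}^k$, $\pi:\mathbb{R}^\ell\to\mathbb{R}^d$ are affine maps with $P=\operatorname{conv}(\pi(Q\cap\sigma^{-1}(\mathbb{Z}^k)))$. *)

theory Defs
  imports "HOL-Analysis.Analysis"
begin

text \<open>Since the dimension \<open>l\<close> of the lifted space of a MILEF is existentially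
quantified, points of \<open>R^l\<close> are represented as functions \<open>nat \<Rightarrow> real\<close> vanishing
from index \<open>l\<close> on.\<close>

definition Rn :: "nat \<Rightarrow> (nat \<Rightarrow> real) set" where
  "Rn n = {x. \<forall>i\<ge>n. x i = 0}"

definition Zn :: "nat \<Rightarrow> (nat \<Rightarrow> real) set" where
  "Zn n = {z \<in> Rn n. \<forall>i<n. z i \<in> \<int>}"

definition polyhedron_n :: "nat \<Rightarrow> (nat \<Rightarrow> real) set \<Rightarrow> bool" where
  "polyhedron_n l Q \<longleftrightarrow>
     (\<exists>(r::nat) a \<beta>. Q = {x \<in> Rn l. \<forall>i<r. (\<Sum>j<l. a i j * x j) \<le> \<beta> i})"

definition convex_n :: "(nat \<Rightarrow> real) set \<Rightarrow> bool" where
  "convex_n S \<longleftrightarrow> (\<forall>a\<in>S. \<forall>b\<in>S. \<forall>t::real. 0 \<le> t \<and> t \<le> 1 \<longrightarrow>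
                      (\<lambda>i. (1 - t) * a i + t * b i) \<in> S)"

definition face_n :: "(nat \<Rightarrow> real) set \<Rightarrow> (nat \<Rightarrow> real) set \<Rightarrow> bool" where
  "face_n F Q \<longleftrightarrow> F \<subseteq> Q \<and> convex_n F \<and>
     (\<forall>a\<in>Q. \<forall>b\<in>Q. \<forall>x\<in>F. a \<noteq> b \<and>
        (\<exists>t::real. 0 < t \<and> t < 1 \<and> x = (\<lambda>i. (1 - t) * a i + t * b i))
        \<longrightarrow> a \<in> F \<and> b \<in> F)"

definition lin_indep_n :: "(nat \<Rightarrow> nat \<Rightarrow> real) \<Rightarrow> nat \<Rightarrow> bool" where
  "lin_indep_n v r \<longleftrightarrow>
     (\<forall>c::nat \<Rightarrow> real. (\<forall>j. (\<Sum>i<r. c i * v i j) = 0) \<longrightarrow> (\<forall>i<r. c i = 0))"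

definition affdim_n :: "(nat \<Rightarrow> real) set \<Rightarrow> int" where
  "affdim_n S = (if S = {} then -1 else
     int (GREATEST r. \<exists>x::nat \<Rightarrow> nat \<Rightarrow> real. (\<forall>i\<le>r. x i \<in> S) \<and>
            lin_indep_n (\<lambda>i j. x (Suc i) j - x 0 j) r))"

definition facet_n :: "(nat \<Rightarrow> real) set \<Rightarrow> (nat \<Rightarrow> real) set \<Rightarrow> bool" where
  "facet_n F Q \<longleftrightarrow> face_n F Q \<and> F \<noteq> {} \<and> affdim_n F = affdim_n Q - 1"

text \<open>Affine maps R^l \<rightarrow> R^k and R^l \<rightarrow> real^'d (only their values on R^l matter).\<close>
definition affine_nn :: "nat \<Rightarrow> nat \<Rightarrow> ((nat \<Rightarrow> real) \<Rightarrow> (nat \<Rightarrow> real)) \<Rightarrow> bool" where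
  "affine_nn l k \<sigma> \<longleftrightarrow> (\<exists>A b. \<forall>x\<in>Rn l.
      \<sigma> x = (\<lambda>i. if i < k then b i + (\<Sum>j<l. A i j * x j) else 0))"

definition affine_nv :: "nat \<Rightarrow> ((nat \<Rightarrow> real) \<Rightarrow> 'a::real_vector) \<Rightarrow> bool" where
  "affine_nv l \<pi> \<longleftrightarrow> (\<exists>v c. \<forall>x\<in>Rn l. \<pi> x = c + (\<Sum>j<l. x j *\<^sub>R v j))"

definition has_MILEF :: "nat \<Rightarrow> nat \<Rightarrow> (real ^ 'd) set \<Rightarrow> bool" where
  "has_MILEF m k P \<longleftrightarrow>
     (\<exists>l Q \<sigma> \<pi>. Q \<subseteq> Rn l \<and> polyhedron_n l Q \<and>
        finite {F. facet_n F Q} \<and> card {F. facet_n F Q} \<le> m \<and>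
        affine_nn l k \<sigma> \<and> affine_nv l \<pi> \<and>
        P = convex hull (\<pi> ` {x \<in> Q. \<sigma> x \<in> Zn k}))"

end

theory Submission
  imports Defs
begin

definition lf :: "nat \<Rightarrow> (nat \<Rightarrow> real) \<Rightarrow> (nat \<Rightarrow> real) \<Rightarrow> real" where
  "lf l a x = (\<Sum>j<l. a j * x j)"

lemma lf_comb: "lf l a (\<lambda>i. u * x i + v * y i) = u * lf l a x + v * lf l a y"
  by (simp add: lf_def sum.distrib sum_distrib_left algebra_simps)

lemma lf_diff: "lf l a (\<lambda>i. x i - y i) = lf l a x - lf l a y"
  by (simp add: lf_def sum_subtractf algebra_simps)

lemma lf_sum: "lf l a (\<lambda>j. \<Sum>k<r. c k * w k j) = (\<Sum>k<r. c k * lf l a (w k))"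
  unfolding lf_def by (simp add: sum_distrib_left sum.swap[of _ "{..<l}"] algebra_simps)

lemma Rn_comb: "x \<in> Rn l \<Longrightarrow> y \<in> Rn l \<Longrightarrow> (\<lambda>i. u * x i + v * y i) \<in> Rn l"
  by (simp add: Rn_def)

lemma Rn_diff: "x \<in> Rn l \<Longrightarrow> y \<in> Rn l \<Longrightarrow> (\<lambda>i. x i - y i) \<in> Rn l"
  by (simp add: Rn_def)

lemma Rn_sum: "(\<And>k. k < r \<Longrightarrow> w k \<in> Rn l) \<Longrightarrow> (\<lambda>j. \<Sum>k<r. c k * w k j) \<in> Rn l"
  by (simp add: Rn_def)

lemma small_eps:
  assumes "finite K" "\<forall>k\<in>K. 0 < f k"
  shows "\<exists>e>0. \<forall>k\<in>K. e * g k < (f k::real)"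
  using assms
proof (induction K rule: finite_induct)
  case empty then show ?case by (intro exI[of _ 1]) auto
next
  case (insert k K)
  then obtain e where e: "e > 0" "\<forall>k\<in>K. e * g k < f k" by auto
  define e' where "e' = min e (f k / (\<bar>g k\<bar> + 1))"
  have fk: "f k > 0" using insert by auto
  have e'pos: "e' > 0" using e fk by (simp add: e'_def)
  have "e' * g k \<le> e' * \<bar>g k\<bar>" using e'pos by (simp add: mult_left_mono)
  also have "\<dots> \<le> (f k / (\<bar>g k\<bar> + 1)) * \<bar>g k\<bar>" unfolding e'_def by (intro mult_right_mono) auto
  also have "\<dots> < f k"
  proof -
    have "(f k / (\<bar>g k\<bar> + 1)) * \<bar>g k\<bar> = f k * (\<bar>g k\<bar> / (\<bar>g k\<bar> + 1))" by simp
    also have "\<dots> < f k * 1" using fk by (intro mult_strict_left_mono) auto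
    finally show ?thesis by simp
  qed
  finally have 1: "e' * g k < f k" .
  have 2: "\<forall>k'\<in>K. e' * g k' < f k'"
  proof
    fix k' assume "k' \<in> K"
    then have h: "e * g k' < f k'" using e by auto
    show "e' * g k' < f k'"
    proof (cases "g k' \<ge> 0")
      case True
      then have "e' * g k' \<le> e * g k'" by (simp add: e'_def mult_right_mono)
      then show ?thesis using h by linarith
    next
      case False
      then have "e' * g k' \<le> 0" using e'pos by (simp add: mult_nonneg_nonpos)
      moreover have "0 < f k'" using insert \<open>k' \<in> K\<close> by auto
      ultimately show ?thesis by linarith
    qed
  qed
  show ?case using 1 2 e'pos by auto
qed

lemma conv_eq:
  fixes t A B \<beta> :: real
  assumes "0 < t" "t < 1" "A \<le> \<beta>" "B \<le> \<beta>" "(1 - t) * A + t * B = \<beta>"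
  shows "A = \<beta> \<and> B = \<beta>"
proof -
  have "(1 - t) * (\<beta> - A) + t * (\<beta> - B) = 0" using assms(5) by (simp add: algebra_simps)
  moreover have "(1 - t) * (\<beta> - A) \<ge> 0" "t * (\<beta> - B) \<ge> 0" using assms by auto
  ultimately have "(1 - t) * (\<beta> - A) = 0" "t * (\<beta> - B) = 0" by linarith+
  then show ?thesis using assms by auto
qed

lemma conv_le:
  fixes t A B \<beta> :: real
  assumes "0 \<le> t" "t \<le> 1" "A \<le> \<beta>" "B \<le> \<beta>"
  shows "(1 - t) * A + t * B \<le> \<beta>"
proof -
  have "(1 - t) * A \<le> (1 - t) * \<beta>" "t * B \<le> t * \<beta>" using assms by (auto intro: mult_left_mono)
  then show ?thesis by (simp add: algebra_simps)
qed

lemma conv_lt: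
  fixes t A B \<beta> :: real
  assumes "0 \<le> t" "t < 1" "A < \<beta>" "B \<le> \<beta>"
  shows "(1 - t) * A + t * B < \<beta>"
proof -
  have "(1 - t) * A < (1 - t) * \<beta>" "t * B \<le> t * \<beta>" using assms by (auto intro: mult_left_mono)
  then show ?thesis by (simp add: algebra_simps)
qed

definition psys :: "nat \<Rightarrow> nat set \<Rightarrow> (nat \<Rightarrow> nat \<Rightarrow> real) \<Rightarrow> (nat \<Rightarrow> real) \<Rightarrow> nat set \<Rightarrow> (nat \<Rightarrow> nat \<Rightarrow> real) \<Rightarrow> (nat \<Rightarrow> real) \<Rightarrow> (nat \<Rightarrow> real) set" where
  "psys l S a \<beta> T c \<gamma> = {x \<in> Rn l. (\<forall>j\<in>S. lf l (a j) x \<le> \<beta> j) \<and> (\<forall>j\<in>T. lf l (c j) x = \<gamma> j)}"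

lemma psys_face:
  assumes "J \<subseteq> S"
  shows "face_n {x \<in> psys l S a \<beta> T c \<gamma>. \<forall>j\<in>J. lf l (a j) x = \<beta> j} (psys l S a \<beta> T c \<gamma>)"
  unfolding face_n_def
proof (intro conjI)
  show "convex_n {x \<in> psys l S a \<beta> T c \<gamma>. \<forall>j\<in>J. lf l (a j) x = \<beta> j}"
    unfolding convex_n_def
  proof (intro ballI allI impI)
    fix p q and t :: real
    assume p: "p \<in> {x \<in> psys l S a \<beta> T c \<gamma>. \<forall>j\<in>J. lf l (a j) x = \<beta> j}"
      and q: "q \<in> {x \<in> psys l S a \<beta> T c \<gamma>. \<forall>j\<in>J. lf l (a j) x = \<beta> j}"
      and t: "0 \<le> t \<and> t \<le> 1"
    have e: "(1 - t) * A + t * A = A" for A :: real by (simp add: algebra_simps)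
    show "(\<lambda>i. (1 - t) * p i + t * q i) \<in> {x \<in> psys l S a \<beta> T c \<gamma>. \<forall>j\<in>J. lf l (a j) x = \<beta> j}"
      using p q t unfolding psys_def by (auto simp: lf_comb Rn_comb e intro!: conv_le)
  qed
  show "\<forall>aa\<in>psys l S a \<beta> T c \<gamma>. \<forall>b\<in>psys l S a \<beta> T c \<gamma>.
     \<forall>x\<in>{x \<in> psys l S a \<beta> T c \<gamma>. \<forall>j\<in>J. lf l (a j) x = \<beta> j}.
        aa \<noteq> b \<and> (\<exists>t>0. t < 1 \<and> x = (\<lambda>i. (1 - t) * aa i + t * b i)) \<longrightarrow>
        aa \<in> {x \<in> psys l S a \<beta> T c \<gamma>. \<forall>j\<in>J. lf l (a j) x = \<beta> j} \<and>
        b \<in> {x \<in> psys l S a \<beta> T c \<gamma>. \<forall>j\<in>J. lf l (a j) x = \<beta> j}"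
  proof (intro ballI impI)
    fix p q x assume p: "p \<in> psys l S a \<beta> T c \<gamma>" and q: "q \<in> psys l S a \<beta> T c \<gamma>"
      and x: "x \<in> {x \<in> psys l S a \<beta> T c \<gamma>. \<forall>j\<in>J. lf l (a j) x = \<beta> j}"
      and h: "p \<noteq> q \<and> (\<exists>t>0. t < 1 \<and> x = (\<lambda>i. (1 - t) * p i + t * q i))"
    then obtain t where t: "0 < t" "t < 1" "x = (\<lambda>i. (1 - t) * p i + t * q i)" by auto
    have "\<forall>j\<in>J. lf l (a j) p = \<beta> j \<and> lf l (a j) q = \<beta> j"
    proof
      fix j assume j: "j \<in> J"
      then have "lf l (a j) p \<le> \<beta> j" "lf l (a j) q \<le> \<beta> j" using p q assms by (auto simp: psys_def)
      moreover have "(1 - t) * lf l (a j) p + t * lf l (a j) q = \<beta> j"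
        using x j t(3) lf_comb by auto
      ultimately show "lf l (a j) p = \<beta> j \<and> lf l (a j) q = \<beta> j" using conv_eq t by blast
    qed
    then show "p \<in> {x \<in> psys l S a \<beta> T c \<gamma>. \<forall>j\<in>J. lf l (a j) x = \<beta> j} \<and>
        q \<in> {x \<in> psys l S a \<beta> T c \<gamma>. \<forall>j\<in>J. lf l (a j) x = \<beta> j}" using p q by auto
  qed
qed auto

lemma psys_convex: "convex_n (psys l S a \<beta> T c \<gamma>)"
  using psys_face[of "{}" S l a \<beta> T c \<gamma>] by (simp add: face_n_def)

definition AI :: "(nat \<Rightarrow> real) set \<Rightarrow> nat \<Rightarrow> bool" where
  "AI S r \<longleftrightarrow> (\<exists>x. (\<forall>i\<le>r. x i \<in> S) \<and> lin_indep_n (\<lambda>i j. x (Suc i) j - x 0 j) r)"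

definition skip :: "nat \<Rightarrow> nat \<Rightarrow> nat" where "skip p i = (if i < p then i else Suc i)"
definition unskip :: "nat \<Rightarrow> nat \<Rightarrow> nat" where "unskip p i = (if i < p then i else i - 1)"

lemma skip_ne: "skip p i \<noteq> p" by (simp add: skip_def)
lemma unskip_skip[simp]: "unskip p (skip p i) = i" by (simp add: skip_def unskip_def)
lemma skip_less: "i < r - 1 \<Longrightarrow> p < r \<Longrightarrow> skip p i < r" by (auto simp: skip_def)

lemma sum_skip:
  assumes "p < (r::nat)"
  shows "(\<Sum>k<r. f k) = f p + (\<Sum>i<r-1. f (skip p i))"
proof -
  have "(\<Sum>k<r. f k) = f p + (\<Sum>k\<in>{..<r}-{p}. f k)"
    using assms by (simp add: sum.remove)
  also have "(\<Sum>k\<in>{..<r}-{p}. f k) = (\<Sum>i<r-1. f (skip p i))"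
    by (rule sum.reindex_bij_witness[where i="skip p" and j="unskip p"])
       (use assms in \<open>auto simp: skip_def unskip_def split: if_splits\<close>)
  finally show ?thesis .
qed

lemma indep_bound:
  "lin_indep_n v r \<Longrightarrow> (\<forall>i<r. v i \<in> Rn l) \<Longrightarrow> r \<le> l"
proof (induction l arbitrary: v r)
  case 0
  show ?case
  proof (rule ccontr)
    assume "\<not> r \<le> 0"
    have "\<forall>i<r. v i = (\<lambda>_. 0)" using 0 by (auto simp: Rn_def)
    then have h: "\<forall>j. (\<Sum>i<r. (\<lambda>_. 1::real) i * v i j) = 0" by simp
    have "\<forall>i<r. (1::real) = 0"
      using spec[OF 0(1)[unfolded lin_indep_n_def], of "\<lambda>_. 1"] h by simp
    then show False using \<open>\<not> r \<le> 0\<close> by auto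
  qed
next
  case (Suc l)
  show ?case
  proof (cases "\<forall>i<r. v i l = 0")
    case True
    have "\<forall>i<r. v i \<in> Rn l"
    proof (intro allI impI)
      fix i assume i: "i < r"
      have A: "\<forall>j\<ge>Suc l. v i j = 0" using Suc.prems(2) i by (simp add: Rn_def)
      have "v i l = 0" using True i by simp
      show "v i \<in> Rn l" unfolding Rn_def
      proof (intro CollectI allI impI)
        fix j assume "l \<le> j"
        show "v i j = 0"
        proof (cases "j = l")
          case True then show ?thesis using \<open>v i l = 0\<close> by simp
        next
          case False then show ?thesis using A \<open>l \<le> j\<close> by simp
        qed
      qed
    qed
    then show ?thesis using Suc.IH[OF Suc.prems(1)] by simp
  next
    case False
    then obtain p where p: "p < r" "v p l \<noteq> 0" by auto
    define w where "w = (\<lambda>i j. v (skip p i) j - (v (skip p i) l / v p l) * v p j)"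
    have wR: "\<forall>i<r-1. w i \<in> Rn l"
    proof (intro allI impI)
      fix i assume "i < r - 1"
      then have "skip p i < r" using p by (simp add: skip_less)
      then have a: "v (skip p i) \<in> Rn (Suc l)" "v p \<in> Rn (Suc l)" using Suc.prems p by auto
      show "w i \<in> Rn l" unfolding Rn_def
      proof (intro CollectI allI impI)
        fix j assume "l \<le> j"
        show "w i j = 0"
        proof (cases "j = l")
          case True then show ?thesis using p by (simp add: w_def)
        next
          case False then have "Suc l \<le> j" using \<open>l \<le> j\<close> by simp
          then show ?thesis using a by (simp add: w_def Rn_def)
        qed
      qed
    qed
    have "lin_indep_n w (r - 1)"
      unfolding lin_indep_n_def
    proof (intro allI impI)
      fix c i assume h: "\<forall>j. (\<Sum>i<r - 1. c i * w i j) = 0" and i: "i < r - 1"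
      define s where "s = (\<Sum>i<r-1. c i * v (skip p i) l) / v p l"
      define c' where "c' = (\<lambda>k. if k = p then - s else c (unskip p k))"
      have "\<forall>j. (\<Sum>k<r. c' k * v k j) = 0"
      proof
        fix j
        have "(\<Sum>k<r. c' k * v k j) = c' p * v p j + (\<Sum>i<r-1. c' (skip p i) * v (skip p i) j)"
          using sum_skip[OF p(1)] by blast
        also have "\<dots> = - s * v p j + (\<Sum>i<r-1. c i * v (skip p i) j)"
          by (simp add: c'_def skip_ne)
        also have "\<dots> = (\<Sum>i<r - 1. c i * w i j)"
        proof -
          have "(\<Sum>i<r - 1. c i * w i j) = (\<Sum>i<r - 1. c i * v (skip p i) j - (c i * v (skip p i) l / v p l) * v p j)"
            by (intro sum.cong refl) (simp add: w_def right_diff_distrib)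
          also have "\<dots> = (\<Sum>i<r - 1. c i * v (skip p i) j) - (\<Sum>i<r - 1. c i * v (skip p i) l / v p l) * v p j"
            by (simp only: sum_subtractf sum_distrib_right)
          also have "(\<Sum>i<r - 1. c i * v (skip p i) l / v p l) = s"
            by (simp only: s_def sum_divide_distrib)
          finally show ?thesis by simp
        qed
        finally show "(\<Sum>k<r. c' k * v k j) = 0" using h by simp
      qed
      then have "\<forall>k<r. c' k = 0" using Suc.prems(1) unfolding lin_indep_n_def by blast
      then have "c' (skip p i) = 0" using i p skip_less by blast
      then show "c i = 0" by (simp add: c'_def skip_ne)
    qed
    then have "r - 1 \<le> l" using Suc.IH wR by blast
    then show ?thesis by simp
  qed
qed

lemma AI0: "S \<noteq> {} \<Longrightarrow> AI S 0"
  unfolding AI_def lin_indep_n_def by auto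

lemma AI_le: "S \<subseteq> Rn l \<Longrightarrow> AI S r \<Longrightarrow> r \<le> l"
  unfolding AI_def
proof (elim exE conjE)
  fix x assume S: "S \<subseteq> Rn l" and x: "\<forall>i\<le>r. x i \<in> S" and li: "lin_indep_n (\<lambda>i j. x (Suc i) j - x 0 j) r"
  have "\<forall>i<r. (\<lambda>j. x (Suc i) j - x 0 j) \<in> Rn l"
  proof (intro allI impI)
    fix i assume "i < r"
    then have "x (Suc i) \<in> Rn l" "x 0 \<in> Rn l" using x S by auto
    then show "(\<lambda>j. x (Suc i) j - x 0 j) \<in> Rn l" by (rule Rn_diff)
  qed
  then show "r \<le> l" using indep_bound[OF li] by auto
qed

lemma affdim_alt: "S \<noteq> {} \<Longrightarrow> affdim_n S = int (GREATEST r. AI S r)"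
  unfolding affdim_n_def AI_def by simp

lemma affdim_AI:
  assumes "S \<subseteq> Rn l" "S \<noteq> {}"
  shows "AI S (nat (affdim_n S))" "affdim_n S \<ge> 0"
proof -
  have "AI S (GREATEST r. AI S r)"
    by (rule GreatestI_nat[of _ 0 l]) (use AI0 assms AI_le in auto)
  then show "AI S (nat (affdim_n S))" "affdim_n S \<ge> 0" using affdim_alt assms by auto
qed

lemma AI_affdim:
  assumes "S \<subseteq> Rn l" "AI S r"
  shows "int r \<le> affdim_n S"
proof -
  have ne: "S \<noteq> {}" using assms(2) by (auto simp: AI_def)
  have "r \<le> (GREATEST r. AI S r)"
    by (rule Greatest_le_nat[of _ _ l]) (use assms AI_le in auto)
  then show ?thesis using affdim_alt ne by auto
qed

definition pt :: "(nat \<Rightarrow> nat \<Rightarrow> real) \<Rightarrow> nat \<Rightarrow> (nat \<Rightarrow> real) \<Rightarrow> nat \<Rightarrow> real" where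
  "pt x r la = (\<lambda>j. x 0 j + (\<Sum>i<r. la i * (x (Suc i) j - x 0 j)))"

lemma pt_affine:
  "pt x r (\<lambda>i. (1 - t) * \<alpha> i + t * \<beta> i) = (\<lambda>j. (1 - t) * pt x r \<alpha> j + t * pt x r \<beta> j)"
  unfolding pt_def
proof (rule ext)
  fix j
  have "(\<Sum>i<r. ((1 - t) * \<alpha> i + t * \<beta> i) * (x (Suc i) j - x 0 j))
     = (1 - t) * (\<Sum>i<r. \<alpha> i * (x (Suc i) j - x 0 j)) + t * (\<Sum>i<r. \<beta> i * (x (Suc i) j - x 0 j))"
  proof -
    have "(\<Sum>i<r. ((1 - t) * \<alpha> i + t * \<beta> i) * (x (Suc i) j - x 0 j))
       = (\<Sum>i<r. (1 - t) * (\<alpha> i * (x (Suc i) j - x 0 j)) + t * (\<beta> i * (x (Suc i) j - x 0 j)))"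
      by (intro sum.cong refl) (simp add: distrib_right)
    also have "\<dots> = (\<Sum>i<r. (1 - t) * (\<alpha> i * (x (Suc i) j - x 0 j))) + (\<Sum>i<r. t * (\<beta> i * (x (Suc i) j - x 0 j)))"
      by (rule sum.distrib)
    finally show ?thesis by (simp only: sum_distrib_left)
  qed
  then show "x 0 j + (\<Sum>i<r. ((1 - t) * \<alpha> i + t * \<beta> i) * (x (Suc i) j - x 0 j)) =
         (1 - t) * (x 0 j + (\<Sum>i<r. \<alpha> i * (x (Suc i) j - x 0 j))) + t * (x 0 j + (\<Sum>i<r. \<beta> i * (x (Suc i) j - x 0 j)))"
    by (simp add: algebra_simps)
qed

lemma pt_in:
  assumes "convex_n A" "\<forall>i\<le>r. x i \<in> A" "\<forall>i<r. la i \<ge> 0" "(\<Sum>i<r. la i) \<le> 1"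
  shows "pt x r la \<in> A"
  using assms(2-4)
proof (induction r arbitrary: la)
  case 0
  then show ?case by (simp add: pt_def)
next
  case (Suc r)
  have s: "(\<Sum>i<r. la i) + la r \<le> 1" using Suc.prems by simp
  have nn: "(\<Sum>i<r. la i) \<ge> 0" using Suc.prems by (intro sum_nonneg) auto
  show ?case
  proof (cases "la r = 1")
    case True
    then have "(\<Sum>i<r. la i) = 0" using s nn by linarith
    then have z: "\<forall>i<r. la i = 0" using Suc.prems sum_nonneg_eq_0_iff[of "{..<r}" la] by auto
    have "pt x (Suc r) la = x (Suc r)"
      unfolding pt_def using z True by auto
    then show ?thesis using Suc.prems by auto
  next
    case False
    have lr: "la r < 1" "la r \<ge> 0" using s nn False Suc.prems(2) by auto
    define la' where "la' = (\<lambda>i. la i / (1 - la r))"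
    have "(\<Sum>i<r. la' i) = (\<Sum>i<r. la i) / (1 - la r)"
      by (simp add: la'_def sum_divide_distrib)
    also have "\<dots> \<le> 1" using s lr by (simp add: divide_le_eq)
    finally have "pt x r la' \<in> A" using Suc.IH Suc.prems lr by (auto simp: la'_def)
    then have "(\<lambda>j. (1 - la r) * pt x r la' j + la r * x (Suc r) j) \<in> A"
      using assms(1) Suc.prems(1) lr unfolding convex_n_def by auto
    moreover have "(\<lambda>j. (1 - la r) * pt x r la' j + la r * x (Suc r) j) = pt x (Suc r) la"
    proof
      fix j
      have "(1 - la r) * (\<Sum>i<r. la' i * (x (Suc i) j - x 0 j)) = (\<Sum>i<r. la i * (x (Suc i) j - x 0 j))"
        using lr by (simp add: la'_def sum_distrib_left)
      then show "(1 - la r) * pt x r la' j + la r * x (Suc r) j = pt x (Suc r) la j"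
        unfolding pt_def by (simp add: algebra_simps)
    qed
    ultimately show ?thesis by simp
  qed
qed

lemma in_face_from_affine:
  assumes face: "face_n A B" and x: "\<forall>i\<le>r. x i \<in> A" and y: "y \<in> B"
    and yeq: "y = pt x r \<mu>"
  shows "y \<in> A"
proof -
  have conv: "convex_n A" and AB: "A \<subseteq> B" using face by (auto simp: face_n_def)
  define la where "la = (\<lambda>i::nat. 1 / (real r + 1))"
  define M where "M = 1 + (\<Sum>i<r. \<bar>\<mu> i - la i\<bar>)"
  have M1: "M \<ge> 1" by (simp add: M_def sum_nonneg)
  define e where "e = 1 / ((real r + 1) * M)"
  have epos: "e > 0" using M1 by (simp add: e_def)
  have eM: "e * M = 1 / (real r + 1)" using M1 by (simp add: e_def)
  have bnd: "e * \<bar>\<mu> i - la i\<bar> < 1 / (real r + 1)" if "i < r" for i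
  proof -
    have "\<bar>\<mu> i - la i\<bar> \<le> (\<Sum>i<r. \<bar>\<mu> i - la i\<bar>)"
      using that by (intro member_le_sum) auto
    then have "\<bar>\<mu> i - la i\<bar> < M" by (simp add: M_def)
    then show ?thesis using epos eM by (metis mult_strict_left_mono)
  qed
  define \<alpha> where "\<alpha> = (\<lambda>i. la i - e * (\<mu> i - la i))"
  have \<alpha>nn: "\<forall>i<r. \<alpha> i \<ge> 0"
  proof (intro allI impI)
    fix i assume "i < r"
    have "e * (\<mu> i - la i) \<le> e * \<bar>\<mu> i - la i\<bar>" using epos by (intro mult_left_mono) auto
    then show "\<alpha> i \<ge> 0" using bnd[OF \<open>i<r\<close>] by (simp add: \<alpha>_def la_def)
  qed
  have "(\<Sum>i<r. \<alpha> i) = (\<Sum>i<r. la i) - (\<Sum>i<r. e * (\<mu> i - la i))"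
    unfolding \<alpha>_def by (rule sum_subtractf)
  also have "\<dots> = real r / (real r + 1) - e * (\<Sum>i<r. \<mu> i - la i)"
    by (simp add: la_def sum_distrib_left)
  also have "\<dots> \<le> 1"
  proof -
    have "- (e * (\<Sum>i<r. \<mu> i - la i)) \<le> e * (\<Sum>i<r. \<bar>\<mu> i - la i\<bar>)"
    proof -
      have "\<bar>\<Sum>i<r. \<mu> i - la i\<bar> \<le> (\<Sum>i<r. \<bar>\<mu> i - la i\<bar>)" by (rule sum_abs)
      moreover have "- (\<Sum>i<r. \<mu> i - la i) \<le> \<bar>\<Sum>i<r. \<mu> i - la i\<bar>" by simp
      ultimately have "- (\<Sum>i<r. \<mu> i - la i) \<le> (\<Sum>i<r. \<bar>\<mu> i - la i\<bar>)" by linarith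
      then have "e * (- (\<Sum>i<r. \<mu> i - la i)) \<le> e * (\<Sum>i<r. \<bar>\<mu> i - la i\<bar>)"
        using epos by (intro mult_left_mono) auto
      then show ?thesis by simp
    qed
    also have "\<dots> \<le> e * M" using epos by (simp add: M_def)
    finally have "- (e * (\<Sum>i<r. \<mu> i - la i)) \<le> 1 / (real r + 1)" using eM by simp
    moreover have "real r / (real r + 1) + 1 / (real r + 1) = 1" by (simp add: field_simps)
    ultimately show ?thesis by linarith
  qed
  finally have w: "pt x r \<alpha> \<in> A" using pt_in[OF conv x \<alpha>nn] by simp
  have b: "pt x r la \<in> A" using pt_in[OF conv x] by (simp add: la_def)
  define t where "t = e / (1 + e)"
  have t: "0 < t" "t < 1" using epos by (auto simp: t_def)
  have "(\<lambda>i. (1 - t) * \<alpha> i + t * \<mu> i) = la"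
  proof
    fix i
    have h1: "(1 + e) * (1 - t) = 1" "(1 + e) * t = e" using epos by (simp_all add: t_def field_simps)
    have "(1 + e) * ((1 - t) * \<alpha> i + t * \<mu> i) = ((1 + e) * (1 - t)) * \<alpha> i + ((1 + e) * t) * \<mu> i"
      by (simp add: algebra_simps)
    also have "\<dots> = (1 + e) * la i" unfolding h1 by (simp add: \<alpha>_def algebra_simps)
    finally show "(1 - t) * \<alpha> i + t * \<mu> i = la i" using epos by simp
  qed
  then have beq: "pt x r la = (\<lambda>j. (1 - t) * pt x r \<alpha> j + t * y j)"
    using pt_affine[of x r t \<alpha> \<mu>] yeq by simp
  show ?thesis
  proof (cases "pt x r \<alpha> = y")
    case True then show ?thesis using w by simp
  next
    case False
    then show ?thesis using face w AB y b beq t unfolding face_n_def by blast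
  qed
qed

lemma ext_sum:
  "(\<Sum>i<Suc r. c i * ((x(Suc r := q)) (Suc i) j - (x(Suc r := q)) 0 j))
   = (\<Sum>i<r. c i * (x (Suc i) j - x 0 j)) + c r * (q j - x 0 j)"
  by (simp add: lessThan_Suc add.commute)

lemma dep_last:
  assumes li: "lin_indep_n (\<lambda>i j. x (Suc i) j - x 0 j) r"
    and h: "\<forall>j. (\<Sum>i<r. c i * (x (Suc i) j - x 0 j)) + c r * (q j - x 0 j) = 0"
  shows "(c r = 0 \<longrightarrow> (\<forall>i<r. c i = 0)) \<and> (c r \<noteq> 0 \<longrightarrow> q = pt x r (\<lambda>i. - c i / c r))"
proof (intro conjI impI)
  assume "c r = 0"
  then have "\<forall>j. (\<Sum>i<r. c i * (x (Suc i) j - x 0 j)) = 0" using h by simp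
  then show "\<forall>i<r. c i = 0" using li unfolding lin_indep_n_def by blast
next
  assume cr: "c r \<noteq> 0"
  show "q = pt x r (\<lambda>i. - c i / c r)"
  proof
    fix j
    have "(\<Sum>i<r. - c i / c r * (x (Suc i) j - x 0 j)) = - (\<Sum>i<r. c i * (x (Suc i) j - x 0 j)) / c r"
      by (simp add: sum_divide_distrib sum_negf)
    also have "\<dots> = q j - x 0 j" using h[rule_format, of j] cr by (simp add: field_simps)
    finally show "q j = pt x r (\<lambda>i. - c i / c r) j" by (simp add: pt_def)
  qed
qed

lemma max_span:
  assumes S: "S \<subseteq> Rn l" and x: "\<forall>i\<le>r. x i \<in> S" and li: "lin_indep_n (\<lambda>i j. x (Suc i) j - x 0 j) r"
    and r: "int r = affdim_n S" and q: "q \<in> S"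
  shows "\<exists>\<mu>. q = pt x r \<mu>"
proof -
  have "\<not> AI S (Suc r)"
  proof
    assume "AI S (Suc r)"
    then have "int (Suc r) \<le> affdim_n S" using AI_affdim S by blast
    then show False using r by simp
  qed
  moreover have "\<forall>i\<le>Suc r. (x(Suc r := q)) i \<in> S" using x q by auto
  ultimately have "\<not> lin_indep_n (\<lambda>i j. (x(Suc r := q)) (Suc i) j - (x(Suc r := q)) 0 j) (Suc r)"
    unfolding AI_def by blast
  then obtain c where c: "\<forall>j. (\<Sum>i<Suc r. c i * ((x(Suc r := q)) (Suc i) j - (x(Suc r := q)) 0 j)) = 0"
    and nz: "\<exists>i<Suc r. c i \<noteq> 0"
    unfolding lin_indep_n_def by blast
  have h: "\<forall>j. (\<Sum>i<r. c i * (x (Suc i) j - x 0 j)) + c r * (q j - x 0 j) = 0"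
    using c ext_sum by simp
  show ?thesis
  proof (cases "c r = 0")
    case True
    then have "\<forall>i<r. c i = 0" using dep_last[OF li h] by blast
    then show ?thesis using nz True less_Suc_eq by auto
  next
    case False
    then show ?thesis using dep_last[OF li h] by blast
  qed
qed

lemma face_dim_less:
  assumes face: "face_n A B" and ne: "A \<noteq> {}" and neq: "A \<noteq> B" and B: "B \<subseteq> Rn l"
  shows "affdim_n A < affdim_n B"
proof -
  have AB: "A \<subseteq> B" using face by (simp add: face_n_def)
  then have A: "A \<subseteq> Rn l" using B by auto
  define r where "r = nat (affdim_n A)"
  have r: "int r = affdim_n A" using affdim_AI[OF A ne] by (simp add: r_def)
  obtain x where x: "\<forall>i\<le>r. x i \<in> A" and li: "lin_indep_n (\<lambda>i j. x (Suc i) j - x 0 j) r"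
    using affdim_AI(1)[OF A ne] unfolding AI_def r_def by blast
  obtain y where y: "y \<in> B" "y \<notin> A" using AB neq by auto
  have "lin_indep_n (\<lambda>i j. (x(Suc r := y)) (Suc i) j - (x(Suc r := y)) 0 j) (Suc r)"
    unfolding lin_indep_n_def
  proof (intro allI impI)
    fix c i assume c: "\<forall>j. (\<Sum>i<Suc r. c i * ((x(Suc r := y)) (Suc i) j - (x(Suc r := y)) 0 j)) = 0"
      and i: "i < Suc r"
    have h: "\<forall>j. (\<Sum>i<r. c i * (x (Suc i) j - x 0 j)) + c r * (y j - x 0 j) = 0"
      using c ext_sum by simp
    show "c i = 0"
    proof (cases "c r = 0")
      case True
      then show ?thesis using dep_last[OF li h] i less_Suc_eq by auto
    next
      case False
      then have "y = pt x r (\<lambda>i. - c i / c r)" using dep_last[OF li h] by blast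
      then have "y \<in> A" using in_face_from_affine[OF face x y(1)] by blast
      then show ?thesis using y by blast
    qed
  qed
  moreover have "\<forall>i\<le>Suc r. (x(Suc r := y)) i \<in> B" using x y AB by auto
  ultimately have "AI B (Suc r)" unfolding AI_def by blast
  then have "int (Suc r) \<le> affdim_n B" using AI_affdim B by blast
  then show ?thesis using r by simp
qed

lemma face_restrict: "face_n A C \<Longrightarrow> A \<subseteq> B \<Longrightarrow> B \<subseteq> C \<Longrightarrow> face_n A B"
  unfolding face_n_def by blast

lemma conv_lt2:
  fixes t A B \<beta> :: real
  assumes "0 < t" "t \<le> 1" "A \<le> \<beta>" "B < \<beta>"
  shows "(1 - t) * A + t * B < \<beta>"
proof -
  have "(1 - t) * A \<le> (1 - t) * \<beta>" "t * B < t * \<beta>" using assms by (auto intro: mult_left_mono)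
  then show ?thesis by (simp add: algebra_simps)
qed

lemma relint_pt:
  assumes conv: "convex_n E" and ne: "E \<noteq> {}" and fin: "finite K"
    and le: "\<forall>j\<in>K. \<forall>x\<in>E. lf l (a j) x \<le> \<beta> j"
    and lt: "\<forall>j\<in>K. \<exists>x\<in>E. lf l (a j) x < \<beta> j"
  shows "\<exists>x0\<in>E. \<forall>j\<in>K. lf l (a j) x0 < \<beta> j"
  using fin le lt
proof (induction K rule: finite_induct)
  case empty then show ?case using ne by auto
next
  case (insert j K)
  then obtain x1 where x1: "x1 \<in> E" "\<forall>k\<in>K. lf l (a k) x1 < \<beta> k" by auto
  obtain y where y: "y \<in> E" "lf l (a j) y < \<beta> j" using insert.prems by auto
  define x0 where "x0 = (\<lambda>i. (1 - 1/2) * x1 i + (1/2) * y i)"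
  have "0 \<le> (1/2::real) \<and> (1/2::real) \<le> 1" by simp
  then have "x0 \<in> E" using conv x1(1) y(1) unfolding convex_n_def x0_def by blast
  moreover have "\<forall>k\<in>insert j K. lf l (a k) x0 < \<beta> k"
  proof
    fix k assume k: "k \<in> insert j K"
    have lx: "lf l (a k) x0 = (1 - 1/2) * lf l (a k) x1 + (1/2) * lf l (a k) y"
      unfolding x0_def by (rule lf_comb)
    show "lf l (a k) x0 < \<beta> k"
    proof (cases "k = j")
      case True
      have "lf l (a k) x1 \<le> \<beta> k" using insert.prems True x1 by auto
      then show ?thesis unfolding lx using conv_lt2[of "1/2"] y True by auto
    next
      case False
      then have "k \<in> K" using k by auto
      then have "lf l (a k) x1 < \<beta> k" "lf l (a k) y \<le> \<beta> k" using x1 insert.prems y by auto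
      then show ?thesis unfolding lx using conv_lt[of "1/2"] by auto
    qed
  qed
  ultimately show ?case by blast
qed

lemma face_rep:
  assumes fin: "finite S" and face: "face_n E (psys l S a \<beta> T c \<gamma>)" and ne: "E \<noteq> {}"
  shows "E = {x \<in> psys l S a \<beta> T c \<gamma>. \<forall>j\<in>{j\<in>S. \<forall>x\<in>E. lf l (a j) x = \<beta> j}. lf l (a j) x = \<beta> j}"
    (is "E = {x \<in> ?Q. \<forall>j\<in>?J. _}")
proof
  have EQ: "E \<subseteq> ?Q" and conv: "convex_n E" using face by (auto simp: face_n_def)
  show "E \<subseteq> {x \<in> ?Q. \<forall>j\<in>?J. lf l (a j) x = \<beta> j}" using EQ by auto
  show "{x \<in> ?Q. \<forall>j\<in>?J. lf l (a j) x = \<beta> j} \<subseteq> E"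
  proof
    fix y assume y: "y \<in> {x \<in> ?Q. \<forall>j\<in>?J. lf l (a j) x = \<beta> j}"
    define K where "K = S - ?J"
    have le: "\<forall>j\<in>K. \<forall>x\<in>E. lf l (a j) x \<le> \<beta> j" using EQ by (auto simp: K_def psys_def)
    have "\<forall>j\<in>K. \<exists>x\<in>E. lf l (a j) x < \<beta> j"
    proof
      fix j assume "j \<in> K"
      then obtain x where "x \<in> E" "lf l (a j) x \<noteq> \<beta> j" by (auto simp: K_def)
      then show "\<exists>x\<in>E. lf l (a j) x < \<beta> j" using le \<open>j \<in> K\<close> by force
    qed
    then obtain x0 where x0: "x0 \<in> E" "\<forall>j\<in>K. lf l (a j) x0 < \<beta> j"
      using relint_pt[OF conv ne _ le] fin by (auto simp: K_def)
    show "y \<in> E"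
    proof (cases "y = x0")
      case True then show ?thesis using x0 by simp
    next
      case False
      obtain e where e: "e > 0" "\<forall>j\<in>K. e * (lf l (a j) x0 - lf l (a j) y) < \<beta> j - lf l (a j) x0"
        using small_eps[of K "\<lambda>j. \<beta> j - lf l (a j) x0" "\<lambda>j. lf l (a j) x0 - lf l (a j) y"] fin x0
        by (auto simp: K_def)
      define w where "w = (\<lambda>i. (1 + e) * x0 i + (- e) * y i)"
      have x0Q: "x0 \<in> ?Q" using x0 EQ by auto
      have yQ: "y \<in> ?Q" using y by auto
      have lw: "lf l u w = (1 + e) * lf l u x0 + (- e) * lf l u y" for u
        unfolding w_def by (rule lf_comb)
      have wQ: "w \<in> ?Q"
        unfolding psys_def
      proof (intro CollectI conjI ballI)
        show "w \<in> Rn l" unfolding w_def using x0Q yQ by (intro Rn_comb) (auto simp: psys_def)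
      next
        fix j assume j: "j \<in> S"
        show "lf l (a j) w \<le> \<beta> j"
        proof (cases "j \<in> ?J")
          case True
          then have "lf l (a j) x0 = \<beta> j" "lf l (a j) y = \<beta> j" using x0 y by auto
          then show ?thesis unfolding lw by (simp add: algebra_simps)
        next
          case False
          then have "j \<in> K" using j by (simp add: K_def)
          then have "e * (lf l (a j) x0 - lf l (a j) y) < \<beta> j - lf l (a j) x0" using e by auto
          then show ?thesis unfolding lw by (simp add: algebra_simps)
        qed
      next
        fix j assume j: "j \<in> T"
        then have "lf l (c j) x0 = \<gamma> j" "lf l (c j) y = \<gamma> j" using x0Q yQ by (auto simp: psys_def)
        then show "lf l (c j) w = \<gamma> j" unfolding lw by (simp add: algebra_simps)
      qed
      define t where "t = e / (1 + e)"
      have t: "0 < t" "t < 1" using e by (auto simp: t_def)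
      have x0eq: "x0 = (\<lambda>i. (1 - t) * w i + t * y i)"
      proof
        fix i
        have h1: "(1 - t) * (1 + e) = 1" "(1 - t) * e = t" using e by (simp_all add: t_def field_simps)
        have "(1 - t) * w i + t * y i = ((1 - t) * (1 + e)) * x0 i - ((1 - t) * e) * y i + t * y i"
          by (simp add: w_def algebra_simps)
        also have "\<dots> = x0 i" unfolding h1 by simp
        finally show "x0 i = (1 - t) * w i + t * y i" by simp
      qed
      have "w \<noteq> y"
      proof
        assume "w = y"
        then have "x0 = y" using x0eq by (simp add: algebra_simps)
        then show False using False by simp
      qed
      then show ?thesis using face wQ yQ x0(1) x0eq t unfolding face_n_def by blast
    qed
  qed
qed

lemma lf_zero: "lf l a (\<lambda>j. 0) = 0" by (simp add: lf_def)

lemma facet_from_irred: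
  assumes fin: "finite S" and Qdef: "Q = psys l S a \<beta> T c \<gamma>" and iS: "i \<in> S"
    and x0: "x0 \<in> Q" "\<forall>j\<in>S. (\<exists>q\<in>Q. lf l (a j) q < \<beta> j) \<longrightarrow> lf l (a j) x0 < \<beta> j"
    and y: "y \<in> Rn l" "\<forall>j\<in>S-{i}. lf l (a j) y \<le> \<beta> j" "\<forall>j\<in>T. lf l (c j) y = \<gamma> j" "lf l (a i) y > \<beta> i"
    and qi: "\<exists>q\<in>Q. lf l (a i) q < \<beta> i"
  shows "facet_n {x\<in>Q. lf l (a i) x = \<beta> i} Q"
proof -
  define G where "G = {x\<in>Q. lf l (a i) x = \<beta> i}"
  have QR: "Q \<subseteq> Rn l" by (auto simp: Qdef psys_def)
  have Gface: "face_n G Q"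
    using psys_face[of "{i}" S l a \<beta> T c \<gamma>] iS by (simp add: G_def Qdef)
  have x0i: "lf l (a i) x0 < \<beta> i" using x0 qi iS by blast
  have x0R: "x0 \<in> Rn l" using x0 QR by auto
  define t where "t = (\<beta> i - lf l (a i) x0) / (lf l (a i) y - lf l (a i) x0)"
  have t: "0 < t" "t < 1" using x0i y(4) by (auto simp: t_def field_simps)
  define z where "z = (\<lambda>k. (1 - t) * x0 k + t * y k)"
  have lz: "lf l u z = (1 - t) * lf l u x0 + t * lf l u y" for u unfolding z_def by (rule lf_comb)
  have zi: "lf l (a i) z = \<beta> i"
  proof -
    have "lf l (a i) z = lf l (a i) x0 + t * (lf l (a i) y - lf l (a i) x0)" unfolding lz by (simp add: algebra_simps)
    also have "t * (lf l (a i) y - lf l (a i) x0) = \<beta> i - lf l (a i) x0" using x0i y(4) by (simp add: t_def)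
    finally show ?thesis by simp
  qed
  have zstrict: "\<forall>j\<in>S-{i}. (\<exists>q\<in>Q. lf l (a j) q < \<beta> j) \<longrightarrow> lf l (a j) z < \<beta> j"
  proof (intro ballI impI)
    fix j assume j: "j \<in> S - {i}" and "\<exists>q\<in>Q. lf l (a j) q < \<beta> j"
    then have "lf l (a j) x0 < \<beta> j" using x0 by auto
    then show "lf l (a j) z < \<beta> j" unfolding lz using conv_lt[of t] t y(2) j by auto
  qed
  have zQ: "z \<in> Q" unfolding Qdef psys_def
  proof (intro CollectI conjI ballI)
    show "z \<in> Rn l" unfolding z_def using x0R y(1) by (rule Rn_comb)
  next
    fix j assume j: "j \<in> S"
    show "lf l (a j) z \<le> \<beta> j"
    proof (cases "j = i")
      case True then show ?thesis using zi by simp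
    next
      case False
      have "lf l (a j) x0 \<le> \<beta> j" using x0(1) j by (simp add: Qdef psys_def)
      moreover have "lf l (a j) y \<le> \<beta> j" using y(2) j False by simp
      ultimately show ?thesis unfolding lz using conv_le[of t] t by auto
    qed
  next
    fix j assume j: "j \<in> T"
    then have "lf l (c j) x0 = \<gamma> j" "lf l (c j) y = \<gamma> j" using x0 y(3) by (auto simp: Qdef psys_def)
    then show "lf l (c j) z = \<gamma> j" unfolding lz by (simp add: algebra_simps)
  qed
  have zG: "z \<in> G" using zQ zi by (simp add: G_def)
  have Qne: "Q \<noteq> {}" using zQ by auto
  have GneQ: "G \<noteq> Q"
  proof
    assume "G = Q"
    then show False using qi unfolding G_def by (metis (mono_tags, lifting) mem_Collect_eq order_less_irrefl)
  qed
  have less: "affdim_n G < affdim_n Q"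
    using face_dim_less[OF Gface _ GneQ QR] zG by auto
  define r where "r = nat (affdim_n Q)"
  have r: "int r = affdim_n Q" using affdim_AI[OF QR Qne] by (simp add: r_def)
  obtain p where p: "\<forall>i\<le>r. p i \<in> Q" and li: "lin_indep_n (\<lambda>i j. p (Suc i) j - p 0 j) r"
    using affdim_AI(1)[OF QR Qne] unfolding AI_def r_def by blast
  define v where "v = (\<lambda>k j. p (Suc k) j - p 0 j)"
  have vR: "\<forall>k<r. v k \<in> Rn l" using p QR unfolding v_def by (auto intro!: Rn_diff)
  obtain \<mu>z where \<mu>z: "z = pt p r \<mu>z" using max_span[OF QR p li r zQ] by blast
  obtain \<mu>x where \<mu>x: "x0 = pt p r \<mu>x" using max_span[OF QR p li r x0(1)] by blast
  define \<nu> where "\<nu> = (\<lambda>k. \<mu>z k - \<mu>x k)"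
  define d where "d = (\<lambda>j. z j - x0 j)"
  have dR: "d \<in> Rn l" unfolding d_def using zQ QR x0R by (intro Rn_diff) auto
  have dsum: "d = (\<lambda>j. \<Sum>k<r. \<nu> k * v k j)"
  proof
    fix j
    have "d j = (\<Sum>k<r. \<mu>z k * v k j) - (\<Sum>k<r. \<mu>x k * v k j)"
      unfolding d_def using fun_cong[OF \<mu>z, of j] fun_cong[OF \<mu>x, of j] by (simp add: pt_def v_def)
    also have "\<dots> = (\<Sum>k<r. \<nu> k * v k j)" by (simp add: \<nu>_def sum_subtractf left_diff_distrib)
    finally show "d j = (\<Sum>k<r. \<nu> k * v k j)" .
  qed
  define cd where "cd = lf l (a i) d"
  have cd: "cd > 0" using zi x0i by (simp add: cd_def d_def lf_diff)
  obtain k0 where k0: "k0 < r" "\<nu> k0 \<noteq> 0"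
  proof (rule ccontr)
    assume "\<not> thesis"
    then have "\<forall>k<r. \<nu> k = 0" using that by blast
    then have "d = (\<lambda>j. 0)" unfolding dsum by simp
    then show False using cd by (simp add: cd_def lf_zero)
  qed
  define v' where "v' = (\<lambda>k j. v k j - (lf l (a i) (v k) / cd) * d j)"
  have lv': "lf l u (v' k) = lf l u (v k) - (lf l (a i) (v k) / cd) * lf l u d" for u k
  proof -
    have "v' k = (\<lambda>j. 1 * v k j + (- (lf l (a i) (v k) / cd)) * d j)" by (simp add: v'_def)
    then show ?thesis by (simp only: lf_comb)
  qed
  have v'R: "\<forall>k<r. v' k \<in> Rn l"
  proof (intro allI impI)
    fix k assume "k < r"
    have "v' k = (\<lambda>j. 1 * v k j + (- (lf l (a i) (v k) / cd)) * d j)" by (simp add: v'_def)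
    then show "v' k \<in> Rn l" using vR \<open>k<r\<close> dR Rn_comb by metis
  qed
  have v'i: "lf l (a i) (v' k) = 0" for k using cd by (simp add: lv' cd_def)
  have impl: "lf l (a j) (v' k) = 0" if "j \<in> S" "\<forall>q\<in>Q. lf l (a j) q = \<beta> j" "k < r" for j k
  proof -
    have "lf l (a j) (v k) = 0" using that p unfolding v_def by (simp add: lf_diff)
    moreover have "lf l (a j) d = 0" using that zQ x0(1) unfolding d_def by (simp add: lf_diff)
    ultimately show ?thesis by (simp add: lv')
  qed
  have implT: "lf l (c j) (v' k) = 0" if "j \<in> T" "k < r" for j k
  proof -
    have "\<forall>q\<in>Q. lf l (c j) q = \<gamma> j" using that by (auto simp: Qdef psys_def)
    then have "lf l (c j) (v k) = 0" "lf l (c j) d = 0" using that p zQ x0(1) unfolding v_def d_def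
      by (simp_all add: lf_diff)
    then show ?thesis by (simp add: lv')
  qed
  define NI where "NI = {j\<in>S-{i}. \<exists>q\<in>Q. lf l (a j) q < \<beta> j}"
  have finNI: "finite (NI \<times> {..<r})" using fin by (auto simp: NI_def)
  obtain e where e: "e > 0" "\<forall>jk\<in>NI \<times> {..<r}. e * lf l (a (fst jk)) (v' (snd jk)) < \<beta> (fst jk) - lf l (a (fst jk)) z"
    using small_eps[OF finNI, of "\<lambda>jk. \<beta> (fst jk) - lf l (a (fst jk)) z" "\<lambda>jk. lf l (a (fst jk)) (v' (snd jk))"]
      zstrict by (auto simp: NI_def)
  define qq where "qq = (\<lambda>m. if m = 0 then z else (\<lambda>j. 1 * z j + e * v' (skip k0 (m - 1)) j))"
  have qqG: "\<forall>m\<le>r-1. qq m \<in> G"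
  proof (intro allI impI)
    fix m assume m: "m \<le> r - 1"
    show "qq m \<in> G"
    proof (cases "m = 0")
      case True then show ?thesis using zG by (simp add: qq_def)
    next
      case False
      define k where "k = skip k0 (m - 1)"
      have k: "k < r" unfolding k_def using m False k0 by (intro skip_less) auto
      have qqm: "qq m = (\<lambda>j. 1 * z j + e * v' k j)" using False by (simp add: qq_def k_def)
      have lq: "lf l u (qq m) = lf l u z + e * lf l u (v' k)" for u unfolding qqm lf_comb by simp
      have "qq m \<in> Q" unfolding Qdef psys_def
      proof (intro CollectI conjI ballI)
        show "qq m \<in> Rn l" unfolding qqm using zQ QR v'R k by (intro Rn_comb) auto
      next
        fix j assume j: "j \<in> S"
        show "lf l (a j) (qq m) \<le> \<beta> j"
        proof (cases "j = i")
          case True then show ?thesis using zi v'i by (simp add: lq)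
        next
          case ji: False
          show ?thesis
          proof (cases "\<exists>q\<in>Q. lf l (a j) q < \<beta> j")
            case True
            then have "(j, k) \<in> NI \<times> {..<r}" using j ji k by (auto simp: NI_def)
            then have "e * lf l (a j) (v' k) < \<beta> j - lf l (a j) z" using e by fastforce
            then show ?thesis by (simp add: lq)
          next
            case False
            then have "\<forall>q\<in>Q. lf l (a j) q = \<beta> j" using j by (force simp: Qdef psys_def)
            then show ?thesis using impl[OF j _ k] zQ by (simp add: lq)
          qed
        qed
      next
        fix j assume j: "j \<in> T"
        have "lf l (c j) z = \<gamma> j" using zQ j by (simp add: Qdef psys_def)
        then show "lf l (c j) (qq m) = \<gamma> j" using implT[OF j k] by (simp add: lq)
      qed
      moreover have "lf l (a i) (qq m) = \<beta> i" using zi v'i by (simp add: lq)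
      ultimately show ?thesis by (simp add: G_def)
    qed
  qed
  have "lin_indep_n (\<lambda>m j. qq (Suc m) j - qq 0 j) (r - 1)"
    unfolding lin_indep_n_def
  proof (intro allI impI)
    fix cc m
    assume h: "\<forall>j. (\<Sum>m<r - 1. cc m * (qq (Suc m) j - qq 0 j)) = 0" and m: "m < r - 1"
    define tau where "tau = (\<Sum>m<r - 1. cc m * e * (lf l (a i) (v (skip k0 m)) / cd))"
    define C where "C = (\<lambda>k. (if k = k0 then 0 else cc (unskip k0 k) * e) - tau * \<nu> k)"
    have "\<forall>j. (\<Sum>k<r. C k * v k j) = 0"
    proof
      fix j
      have s1: "(\<Sum>k<r. (if k = k0 then 0 else cc (unskip k0 k) * e) * v k j)
            = (\<Sum>m<r - 1. cc m * e * v (skip k0 m) j)"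
        using sum_skip[OF k0(1), of "\<lambda>k. (if k = k0 then 0 else cc (unskip k0 k) * e) * v k j"]
        by (simp add: skip_ne)
      have s2: "(\<Sum>k<r. \<nu> k * v k j) = d j" using fun_cong[OF dsum, of j] by simp
      have "(\<Sum>k<r. C k * v k j) = (\<Sum>k<r. (if k = k0 then 0 else cc (unskip k0 k) * e) * v k j)
           - tau * (\<Sum>k<r. \<nu> k * v k j)"
        by (simp add: C_def left_diff_distrib sum_subtractf sum_distrib_left mult.assoc)
      also have "\<dots> = (\<Sum>m<r - 1. cc m * e * v (skip k0 m) j) - tau * d j" using s1 s2 by simp
      also have "\<dots> = (\<Sum>m<r - 1. cc m * (qq (Suc m) j - qq 0 j))"
      proof -
        have "(\<Sum>m<r - 1. cc m * (qq (Suc m) j - qq 0 j))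
            = (\<Sum>m<r - 1. cc m * e * v (skip k0 m) j - (cc m * e * (lf l (a i) (v (skip k0 m)) / cd)) * d j)"
          by (intro sum.cong refl) (simp add: qq_def v'_def algebra_simps)
        also have "\<dots> = (\<Sum>m<r - 1. cc m * e * v (skip k0 m) j) - tau * d j"
          by (simp only: sum_subtractf tau_def sum_distrib_right)
        finally show ?thesis by simp
      qed
      also have "\<dots> = 0" using h by simp
      finally show "(\<Sum>k<r. C k * v k j) = 0" .
    qed
    then have C0: "\<forall>k<r. C k = 0" using li unfolding lin_indep_n_def v_def by blast
    then have "C k0 = 0" using k0 by blast
    then have "tau * \<nu> k0 = 0" by (simp add: C_def)
    then have tau0: "tau = 0" using k0 by simp
    have "C (skip k0 m) = 0" using C0 skip_less[OF m k0(1)] by blast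
    then have "cc m * e = 0" using tau0 by (simp add: C_def skip_ne)
    then show "cc m = 0" using e by simp
  qed
  then have "AI G (r - 1)" unfolding AI_def using qqG by blast
  moreover have GR: "G \<subseteq> Rn l" using QR by (auto simp: G_def)
  ultimately have "int (r - 1) \<le> affdim_n G" using AI_affdim by blast
  moreover have "r \<ge> 1" using k0 by simp
  ultimately have "affdim_n Q - 1 \<le> affdim_n G" using r by simp
  then have "affdim_n G = affdim_n Q - 1" using less by simp
  then show ?thesis using Gface zG unfolding facet_n_def G_def by auto
qed

lemma key:
  fixes a :: "nat \<Rightarrow> nat \<Rightarrow> real" and r :: nat
  assumes Qdef: "Q = {x \<in> Rn l. \<forall>i<r. (\<Sum>j<l. a i j * x j) \<le> \<beta> i}"
  shows "{F'. facet_n F' {x\<in>Q. lf l h x = b}} \<subseteq> (\<lambda>G. G \<inter> {x. lf l h x = b}) ` {G. facet_n G Q}"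
proof
  fix F' assume F': "F' \<in> {F'. facet_n F' {x\<in>Q. lf l h x = b}}"
  define c0 :: "nat \<Rightarrow> nat \<Rightarrow> real" where "c0 = (\<lambda>_. h)"
  define g0 :: "nat \<Rightarrow> real" where "g0 = (\<lambda>_. b)"
  define SS where "SS = {S :: nat set. S \<subseteq> {..<r} \<and> Q = psys l S a \<beta> {} c0 g0}"
  have r0: "{..<r} \<in> SS" unfolding SS_def Qdef psys_def lf_def by auto
  define n where "n = (LEAST n. \<exists>S\<in>SS. card S = n)"
  obtain S where S: "S \<in> SS" "card S = n"
    using LeastI_ex[of "\<lambda>n. \<exists>S\<in>SS. card S = n"] r0 unfolding n_def by blast
  have Ssub: "S \<subseteq> {..<r}" and QS: "Q = psys l S a \<beta> {} c0 g0" using S by (auto simp: SS_def)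
  have fin: "finite S" using Ssub finite_subset by blast
  have irred: "\<exists>y\<in>Rn l. (\<forall>j\<in>S-{i}. lf l (a j) y \<le> \<beta> j) \<and> lf l (a i) y > \<beta> i" if i: "i \<in> S" for i
  proof -
    have lt: "card (S - {i}) < n" using card_Diff1_less[OF fin i] S(2) by simp
    have "\<not> (\<exists>S'\<in>SS. card S' = card (S - {i}))"
      using not_less_Least[OF lt[unfolded n_def]] .
    then have "S - {i} \<notin> SS" by blast
    moreover have "S - {i} \<subseteq> {..<r}" using Ssub by blast
    ultimately have ne: "Q \<noteq> psys l (S - {i}) a \<beta> {} c0 g0" unfolding SS_def by blast
    have sub: "Q \<subseteq> psys l (S - {i}) a \<beta> {} c0 g0" unfolding QS psys_def by blast
    obtain y where y: "y \<in> psys l (S - {i}) a \<beta> {} c0 g0" "y \<notin> Q" using ne sub by blast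
    have yR: "y \<in> Rn l" and yle: "\<forall>j\<in>S-{i}. lf l (a j) y \<le> \<beta> j" using y(1) unfolding psys_def by blast+
    have "\<not> lf l (a i) y \<le> \<beta> i"
    proof
      assume "lf l (a i) y \<le> \<beta> i"
      then have "\<forall>j\<in>S. lf l (a j) y \<le> \<beta> j" using yle by blast
      then have "y \<in> psys l S a \<beta> {} c0 g0" using yR unfolding psys_def by blast
      then show False using y(2) QS by blast
    qed
    then show ?thesis using yR yle by auto
  qed
  define Q' where "Q' = {x\<in>Q. lf l h x = b}"
  have Q'S: "Q' = psys l S a \<beta> {0} c0 g0" unfolding Q'_def QS by (auto simp: psys_def c0_def g0_def)
  have QR: "Q \<subseteq> Rn l" using QS by (auto simp: psys_def)
  have Q'R: "Q' \<subseteq> Rn l" using QR by (auto simp: Q'_def)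
  have fac: "face_n F' Q'" "F' \<noteq> {}" "affdim_n F' = affdim_n Q' - 1"
    using F' by (auto simp: facet_n_def Q'_def)
  define J where "J = {j\<in>S. \<forall>x\<in>F'. lf l (a j) x = \<beta> j}"
  have Frep: "F' = {x\<in>Q'. \<forall>j\<in>J. lf l (a j) x = \<beta> j}"
    using face_rep[OF fin fac(1)[unfolded Q'S] fac(2)] unfolding J_def Q'S by simp
  have "F' \<noteq> Q'" using fac(3) by auto
  then obtain q' where q': "q' \<in> Q'" "q' \<notin> F'" using fac(1) by (auto simp: face_n_def)
  then obtain i where i: "i \<in> J" "lf l (a i) q' \<noteq> \<beta> i" using Frep by blast
  have iS: "i \<in> S" using i by (simp add: J_def)
  have q'Q: "q' \<in> Q" using q' by (simp add: Q'_def)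
  have q'i: "lf l (a i) q' < \<beta> i" using i q'Q iS QS by (force simp: psys_def)
  have Qne: "Q \<noteq> {}" using q'Q by auto
  have "\<exists>x0\<in>Q. \<forall>j\<in>{j\<in>S. \<exists>q\<in>Q. lf l (a j) q < \<beta> j}. lf l (a j) x0 < \<beta> j"
    by (rule relint_pt[OF _ Qne]) (use fin QS psys_convex[of l S a \<beta> "{}" c0 g0] in \<open>auto simp: psys_def\<close>)
  then obtain x0 where x0: "x0 \<in> Q" "\<forall>j\<in>S. (\<exists>q\<in>Q. lf l (a j) q < \<beta> j) \<longrightarrow> lf l (a j) x0 < \<beta> j"
    by auto
  obtain y where y: "y \<in> Rn l" "\<forall>j\<in>S-{i}. lf l (a j) y \<le> \<beta> j" "lf l (a i) y > \<beta> i"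
    using irred[OF iS] by blast
  have Gfacet: "facet_n {x\<in>Q. lf l (a i) x = \<beta> i} Q"
    by (rule facet_from_irred[OF fin QS iS x0 y(1,2) _ y(3)]) (use q'Q q'i in auto)
  define E where "E = {x\<in>Q'. lf l (a i) x = \<beta> i}"
  have Eface: "face_n E Q'"
    using psys_face[of "{i}" S l a \<beta> "{0}" c0 g0] iS unfolding E_def Q'S by simp
  have FE: "F' \<subseteq> E" using Frep i(1) by (auto simp: E_def)
  have EQ': "E \<noteq> Q'" using q' i(2) by (auto simp: E_def)
  have ER: "E \<subseteq> Rn l" using Q'R by (auto simp: E_def)
  have "F' = E"
  proof (rule ccontr)
    assume ne: "F' \<noteq> E"
    have "face_n F' E" using face_restrict[OF fac(1) FE] by (auto simp: E_def)
    then have "affdim_n F' < affdim_n E" using face_dim_less[OF _ fac(2) ne ER] by blast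
    moreover have "affdim_n E < affdim_n Q'" using face_dim_less[OF Eface _ EQ' Q'R] FE fac(2) by auto
    ultimately show False using fac(3) by simp
  qed
  then have "F' = {x\<in>Q. lf l (a i) x = \<beta> i} \<inter> {x. lf l h x = b}" by (auto simp: E_def Q'_def)
  then show "F' \<in> (\<lambda>G. G \<inter> {x. lf l h x = b}) ` {G. facet_n G Q}" using Gfacet by blast
qed

lemma hull_face:
  fixes T0 :: "'a::real_inner set"
  assumes le: "convex hull T0 \<subseteq> {y. cc \<bullet> y \<le> \<delta>}"
  shows "convex hull T0 \<inter> {y. cc \<bullet> y = \<delta>} = convex hull (T0 \<inter> {y. cc \<bullet> y = \<delta>})"
proof
  show "convex hull (T0 \<inter> {y. cc \<bullet> y = \<delta>}) \<subseteq> convex hull T0 \<inter> {y. cc \<bullet> y = \<delta>}"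
  proof (rule hull_minimal)
    show "T0 \<inter> {y. cc \<bullet> y = \<delta>} \<subseteq> convex hull T0 \<inter> {y. cc \<bullet> y = \<delta>}"
      using hull_subset[of T0 convex] by blast
    show "convex (convex hull T0 \<inter> {y. cc \<bullet> y = \<delta>})"
      by (intro convex_Int convex_convex_hull convex_hyperplane)
  qed
  show "convex hull T0 \<inter> {y. cc \<bullet> y = \<delta>} \<subseteq> convex hull (T0 \<inter> {y. cc \<bullet> y = \<delta>})"
  proof
    fix y assume y: "y \<in> convex hull T0 \<inter> {y. cc \<bullet> y = \<delta>}"
    then obtain s u where s: "finite s" "s \<subseteq> T0" "\<forall>x\<in>s. 0 \<le> u x" "sum u s = 1" "(\<Sum>v\<in>s. u v *\<^sub>R v) = y"
      unfolding convex_hull_explicit by blast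
    have vle: "\<forall>v\<in>s. cc \<bullet> v \<le> \<delta>"
    proof
      fix v assume "v \<in> s"
      then have "v \<in> convex hull T0" using s(2) by (intro hull_inc) auto
      then show "cc \<bullet> v \<le> \<delta>" using le by auto
    qed
    have "cc \<bullet> y = cc \<bullet> (\<Sum>v\<in>s. u v *\<^sub>R v)" by (simp only: s(5))
    also have "\<dots> = (\<Sum>v\<in>s. cc \<bullet> (u v *\<^sub>R v))" by (rule inner_sum_right)
    also have "\<dots> = (\<Sum>v\<in>s. u v * (cc \<bullet> v))" by (simp only: inner_scaleR_right)
    finally have cy: "(\<Sum>v\<in>s. u v * (cc \<bullet> v)) = \<delta>" using y by simp
    have "(\<Sum>v\<in>s. u v * (\<delta> - cc \<bullet> v)) = (\<Sum>v\<in>s. u v * \<delta> - u v * (cc \<bullet> v))"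
      by (simp only: right_diff_distrib)
    also have "\<dots> = (\<Sum>v\<in>s. u v) * \<delta> - (\<Sum>v\<in>s. u v * (cc \<bullet> v))"
      by (simp only: sum_subtractf sum_distrib_right)
    also have "\<dots> = 0" using cy s(4) by simp
    finally have "(\<Sum>v\<in>s. u v * (\<delta> - cc \<bullet> v)) = 0" .
    moreover have nn: "\<forall>v\<in>s. u v * (\<delta> - cc \<bullet> v) \<ge> 0"
      by (intro ballI mult_nonneg_nonneg) (use s(3) vle in auto)
    moreover have "(\<Sum>v\<in>s. u v * (\<delta> - cc \<bullet> v)) = 0 \<longleftrightarrow> (\<forall>v\<in>s. u v * (\<delta> - cc \<bullet> v) = 0)"
      by (rule sum_nonneg_eq_0_iff[OF s(1)]) (use nn in blast)
    ultimately have z: "\<forall>v\<in>s. u v * (\<delta> - cc \<bullet> v) = 0" by blast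
    define s' where "s' = {v\<in>s. u v \<noteq> 0}"
    have fs': "finite s'" using s(1) by (simp add: s'_def)
    have "sum u s = sum u s'" by (rule sum.mono_neutral_right) (use s(1) in \<open>auto simp: s'_def\<close>)
    moreover have "(\<Sum>v\<in>s. u v *\<^sub>R v) = (\<Sum>v\<in>s'. u v *\<^sub>R v)"
      by (rule sum.mono_neutral_right) (use s(1) in \<open>auto simp: s'_def\<close>)
    moreover have "\<forall>v\<in>s'. v \<in> T0 \<inter> {y. cc \<bullet> y = \<delta>}" using z s(2) by (auto simp: s'_def)
    moreover have "(\<Sum>v\<in>s'. u v *\<^sub>R v) \<in> convex hull (T0 \<inter> {y. cc \<bullet> y = \<delta>})"
    proof (rule convex_sum[OF fs' convex_convex_hull])
      show "(\<Sum>v\<in>s'. u v) = 1" using calculation(1) s(4) by simp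
      show "\<And>i. i \<in> s' \<Longrightarrow> 0 \<le> u i" using s(3) by (simp add: s'_def)
      show "\<And>i. i \<in> s' \<Longrightarrow> i \<in> convex hull (T0 \<inter> {y. cc \<bullet> y = \<delta>})"
        using calculation(3) hull_subset[of "T0 \<inter> {y. cc \<bullet> y = \<delta>}" convex] by blast
    qed
    ultimately show "y \<in> convex hull (T0 \<inter> {y. cc \<bullet> y = \<delta>})" using s(5) by simp
  qed
qed

theorem mainTheorem12:
  fixes P :: "(real ^ 'd) set" and P' :: "(real ^ 'e) set"
    and F :: "(real ^ 'd) set" and f :: "real ^ 'd \<Rightarrow> real ^ 'e"
    and m k :: nat
  assumes "polyhedron P" and "P \<noteq> {}"
    and "polyhedron P'" and "P' \<noteq> {}"
    and "F face_of P"
    and "\<exists>g c. linear g \<and> f = (\<lambda>x. g x + c)"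
    and "P' = f ` F"
    and "has_MILEF m k P"
  shows "has_MILEF m k P'"
proof -
  obtain g c1 where g: "linear g" and fdef: "f = (\<lambda>x. g x + c1)" using assms(6) by blast
  obtain l Q \<sigma> \<pi> where QR: "Q \<subseteq> Rn l" and polyQ: "polyhedron_n l Q"
    and finQ: "finite {F. facet_n F Q}" and cardQ: "card {F. facet_n F Q} \<le> m"
    and \<sigma>: "affine_nn l k \<sigma>" and \<pi>: "affine_nv l \<pi>"
    and Pdef: "P = convex hull (\<pi> ` {x \<in> Q. \<sigma> x \<in> Zn k})"
    using assms(8) unfolding has_MILEF_def by blast
  obtain r :: nat and a :: "nat \<Rightarrow> nat \<Rightarrow> real" and \<beta> where
    Qdef: "Q = {x \<in> Rn l. \<forall>i<r. (\<Sum>j<l. a i j * x j) \<le> \<beta> i}"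
    using polyQ unfolding polyhedron_n_def by blast
  have "F exposed_face_of P" using exposed_face_of_polyhedron[OF assms(1)] assms(5) by simp
  then obtain cc \<delta> where Ple: "P \<subseteq> {x. cc \<bullet> x \<le> \<delta>}" and Fdef: "F = P \<inter> {x. cc \<bullet> x = \<delta>}"
    unfolding exposed_face_of_def by blast
  obtain v c0 where \<pi>def: "\<forall>x\<in>Rn l. \<pi> x = c0 + (\<Sum>j<l. x j *\<^sub>R v j)"
    using \<pi> unfolding affine_nv_def by blast
  define h where "h = (\<lambda>j. cc \<bullet> v j)"
  define b where "b = \<delta> - cc \<bullet> c0"
  have hyp: "cc \<bullet> \<pi> x = \<delta> \<longleftrightarrow> lf l h x = b" if "x \<in> Rn l" for x
  proof -
    have "cc \<bullet> \<pi> x = cc \<bullet> c0 + lf l h x"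
      using \<pi>def that by (simp add: inner_add_right inner_sum_right lf_def h_def mult.commute)
    then show ?thesis by (auto simp: b_def)
  qed
  define Q' where "Q' = {x\<in>Q. lf l h x = b}"
  define a' where "a' = (\<lambda>i. if i < r then a i else if i = r then h else (\<lambda>j. - h j))"
  define \<beta>' where "\<beta>' = (\<lambda>i. if i < r then \<beta> i else if i = r then b else - b)"
  have Q'R: "Q' \<subseteq> Rn l" using QR by (auto simp: Q'_def)
  have "Q' = {x \<in> Rn l. \<forall>i<r + 2. (\<Sum>j<l. a' i j * x j) \<le> \<beta>' i}"
  proof -
    have "(\<forall>i<r + 2. (\<Sum>j<l. a' i j * x j) \<le> \<beta>' i) \<longleftrightarrow>
          (\<forall>i<r. (\<Sum>j<l. a i j * x j) \<le> \<beta> i) \<and> lf l h x = b" for x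
    proof -
      have e: "(\<forall>i<r + 2. (\<Sum>j<l. a' i j * x j) \<le> \<beta>' i) \<longleftrightarrow>
          (\<forall>i<r. (\<Sum>j<l. a' i j * x j) \<le> \<beta>' i) \<and> (\<Sum>j<l. a' r j * x j) \<le> \<beta>' r
           \<and> (\<Sum>j<l. a' (Suc r) j * x j) \<le> \<beta>' (Suc r)"
      proof -
        have iff: "\<And>i. i < r + 2 \<longleftrightarrow> (i < r \<or> i = r \<or> i = Suc r)" by auto
        show ?thesis unfolding iff by blast
      qed
      have s: "(\<Sum>j<l. - h j * x j) = - lf l h x" by (simp add: lf_def sum_negf)
      show ?thesis unfolding e by (auto simp: a'_def \<beta>'_def lf_def sum_negf)
    qed
    then show ?thesis unfolding Q'_def Qdef by auto
  qed
  then have polyQ': "polyhedron_n l Q'" unfolding polyhedron_n_def by blast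
  have sub: "{F'. facet_n F' Q'} \<subseteq> (\<lambda>G. G \<inter> {x. lf l h x = b}) ` {G. facet_n G Q}"
    unfolding Q'_def by (rule key[OF Qdef])
  have finQ': "finite {F'. facet_n F' Q'}" using finite_subset[OF sub] finQ by blast
  have "card {F'. facet_n F' Q'} \<le> card ((\<lambda>G. G \<inter> {x. lf l h x = b}) ` {G. facet_n G Q})"
    by (rule card_mono[OF _ sub]) (use finQ in simp)
  also have "\<dots> \<le> card {G. facet_n G Q}" by (rule card_image_le[OF finQ])
  finally have cardQ': "card {F'. facet_n F' Q'} \<le> m" using cardQ by simp
  have \<pi>': "affine_nv l (\<lambda>x. f (\<pi> x))"
    unfolding affine_nv_def
  proof (intro exI ballI)
    fix x assume x: "x \<in> Rn l"
    show "f (\<pi> x) = (g c0 + c1) + (\<Sum>j<l. x j *\<^sub>R g (v j))"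
      using \<pi>def x by (simp add: fdef linear_add[OF g] linear_sum[OF g] linear_scale[OF g] algebra_simps)
  qed
  define X where "X = {x \<in> Q. \<sigma> x \<in> Zn k}"
  have img: "\<pi> ` {x \<in> Q'. \<sigma> x \<in> Zn k} = \<pi> ` X \<inter> {y. cc \<bullet> y = \<delta>}"
  proof -
    have "{x \<in> Q'. \<sigma> x \<in> Zn k} = {x \<in> X. cc \<bullet> \<pi> x = \<delta>}"
      using hyp QR by (auto simp: Q'_def X_def)
    then show ?thesis by auto
  qed
  have "F = convex hull (\<pi> ` X \<inter> {y. cc \<bullet> y = \<delta>})"
    using hull_face[of "\<pi> ` X" cc \<delta>] Ple Fdef Pdef by (simp add: X_def)
  then have "P' = f ` (convex hull (\<pi> ` {x \<in> Q'. \<sigma> x \<in> Zn k}))" using img assms(7) by simp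
  also have "\<dots> = convex hull (f ` \<pi> ` {x \<in> Q'. \<sigma> x \<in> Zn k})"
  proof -
    have fe: "f ` S = (\<lambda>y. c1 + y) ` (g ` S)" for S by (auto simp: fdef image_image add.commute)
    show ?thesis unfolding fe convex_hull_translation convex_hull_linear_image[OF g] ..
  qed
  also have "\<dots> = convex hull ((\<lambda>x. f (\<pi> x)) ` {x \<in> Q'. \<sigma> x \<in> Zn k})" by (simp add: image_image)
  finally have P'eq: "P' = convex hull ((\<lambda>x. f (\<pi> x)) ` {x \<in> Q'. \<sigma> x \<in> Zn k})" .
  show ?thesis unfolding has_MILEF_def
    using Q'R polyQ' finQ' cardQ' \<sigma> \<pi>' P'eq by blast
qed

end
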